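(* Let $H$ be the disjoint union (with no edges between them) of cliques $KH_1,KH_2,\ldots,KH_s$ of sizes $y_1\ge y_2\ge\cdots\ge y_s\ge 1$. Then $$\rho(H)=\sum_{i=1}^s i\,y_i.$$
   Context: All graphs are finite and simple. A coloring means a proper vertex coloring; an induced subgraph is rainbow if all its vertices have pairwise different colors. For a graph $H$, $\rho(H)$ is the least number $m$ such that there exists a graph $G$ on $m$ vertices such that every proper vertex coloring of $G$ contains a rainbow induced subgraph isomorphic to $H$. *)

theory Defs
  imports Main
begin

definition simple_graph :: "'a set \<Rightarrow> ('a \<Rightarrow> 'a \<Rightarrow> bool) \<Rightarrow> bool" where
  "simple_graph V E \<longleftrightarrow> finite V \<and>
     (\<forall>x y. E x y \<longrightarrow> x \<in> V \<and> y \<in> V \<and> x \<noteq> y \<and> E y x)"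

definition proper_coloring :: "'a set \<Rightarrow> ('a \<Rightarrow> 'a \<Rightarrow> bool) \<Rightarrow> ('a \<Rightarrow> nat) \<Rightarrow> bool" where
  "proper_coloring V E c \<longleftrightarrow> (\<forall>x\<in>V. \<forall>y\<in>V. E x y \<longrightarrow> c x \<noteq> c y)"

definition has_rainbow_induced_copy ::
  "'b set \<Rightarrow> ('b \<Rightarrow> 'b \<Rightarrow> bool) \<Rightarrow> 'a set \<Rightarrow> ('a \<Rightarrow> 'a \<Rightarrow> bool) \<Rightarrow> ('a \<Rightarrow> nat) \<Rightarrow> bool" where
  "has_rainbow_induced_copy VH EH VG EG c \<longleftrightarrow>
     (\<exists>f. inj_on f VH \<and> f ` VH \<subseteq> VG \<and>
          (\<forall>u\<in>VH. \<forall>v\<in>VH. EH u v \<longleftrightarrow> EG (f u) (f v)) \<and>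
          inj_on (c \<circ> f) VH)"

text \<open>Some graph on m vertices (WLOG vertex set {0..<m}) all of whose proper colourings
  contain a rainbow induced copy of H.\<close>
definition rho_witness_size :: "'b set \<Rightarrow> ('b \<Rightarrow> 'b \<Rightarrow> bool) \<Rightarrow> nat \<Rightarrow> bool" where
  "rho_witness_size VH EH m \<longleftrightarrow>
     (\<exists>EG :: nat \<Rightarrow> nat \<Rightarrow> bool. simple_graph {0..<m} EG \<and>
        (\<forall>c. proper_coloring {0..<m} EG c \<longrightarrow> has_rainbow_induced_copy VH EH {0..<m} EG c))"

definition rho :: "'b set \<Rightarrow> ('b \<Rightarrow> 'b \<Rightarrow> bool) \<Rightarrow> nat" where
  "rho VH EH = (LEAST m. rho_witness_size VH EH m)"

text \<open>Disjoint union of cliques of sizes y 0, ..., y (s-1): vertex (i,j) is the j-th vertex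
  of the i-th clique.\<close>
definition cliques_V :: "nat \<Rightarrow> (nat \<Rightarrow> nat) \<Rightarrow> (nat \<times> nat) set" where
  "cliques_V s y = {(i, j). i < s \<and> j < y i}"

definition cliques_E :: "nat \<Rightarrow> (nat \<Rightarrow> nat) \<Rightarrow> (nat \<times> nat) \<Rightarrow> (nat \<times> nat) \<Rightarrow> bool" where
  "cliques_E s y u v \<longleftrightarrow> u \<in> cliques_V s y \<and> v \<in> cliques_V s y \<and> fst u = fst v \<and> u \<noteq> v"

end

theory Submission
  imports Defs
begin

definition indep :: "('a \<Rightarrow> 'a \<Rightarrow> bool) \<Rightarrow> 'a set \<Rightarrow> bool" where
  "indep E I \<longleftrightarrow> (\<forall>x\<in>I. \<forall>y\<in>I. \<not> E x y)"

lemma greedy_col: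
  assumes "finite V" and irr: "\<And>x. \<not> E x x"
  shows "\<exists>c::'a \<Rightarrow> nat. (\<forall>x\<in>V. \<forall>y\<in>V. E x y \<longrightarrow> c x \<noteq> c y) \<and>
     (\<forall>j I. I \<subseteq> {v\<in>V. j \<le> c v} \<longrightarrow> indep E I \<longrightarrow> card I \<le> card {v\<in>V. c v = j})"
  using assms(1)
proof (induction V rule: finite_psubset_induct)
  case (psubset V)
  show ?case
  proof (cases "V = {}")
    case True
    then show ?thesis by auto
  next
    case False
    define S where "S = {I. I \<subseteq> V \<and> indep E I}"
    have finS: "finite S" unfolding S_def using psubset.hyps by auto
    obtain v where v: "v \<in> V" using False by auto
    have vS: "{v} \<in> S" unfolding S_def indep_def using v irr by auto
    hence Sne: "S \<noteq> {}" by auto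
    define k where "k = Max (card ` S)"
    have "k \<in> card ` S" unfolding k_def using finS Sne by (intro Max_in) auto
    then obtain I0 where I0S: "I0 \<in> S" and cI0: "card I0 = k" by auto
    have maxI0: "card I \<le> card I0" if "I \<in> S" for I
      using that finS cI0 k_def by auto
    have I0V: "I0 \<subseteq> V" and indI0: "indep E I0" using I0S S_def by auto
    have "card I0 \<ge> 1" using maxI0[OF vS] by simp
    hence "I0 \<noteq> {}" by auto
    hence sub: "V - I0 \<subset> V" using I0V by auto
    obtain c' :: "'a \<Rightarrow> nat" where c'p: "\<forall>x\<in>V-I0. \<forall>y\<in>V-I0. E x y \<longrightarrow> c' x \<noteq> c' y"
      and c'g: "\<forall>j I. I \<subseteq> {v\<in>V-I0. j \<le> c' v} \<longrightarrow> indep E I \<longrightarrow> card I \<le> card {v\<in>V-I0. c' v = j}"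
      using psubset.IH[OF sub] by blast
    define c where "c = (\<lambda>v. if v \<in> I0 then 0 else Suc (c' v))"
    have propc: "\<forall>x\<in>V. \<forall>y\<in>V. E x y \<longrightarrow> c x \<noteq> c y"
      using c'p indI0 unfolding c_def indep_def by auto
    have gr: "card I \<le> card {v\<in>V. c v = j}" if "I \<subseteq> {v\<in>V. j \<le> c v}" "indep E I" for j I
    proof (cases j)
      case 0
      have "{v\<in>V. c v = j} = I0" using 0 I0V unfolding c_def by auto
      moreover have "I \<in> S" using that S_def by auto
      ultimately show ?thesis using maxI0 by auto
    next
      case (Suc j')
      have "I \<subseteq> {v\<in>V-I0. j' \<le> c' v}" using that(1) Suc unfolding c_def by (auto split: if_splits)
      hence "card I \<le> card {v\<in>V-I0. c' v = j'}" using c'g that(2) by blast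
      moreover have "{v\<in>V-I0. c' v = j'} = {v\<in>V. c v = j}" using Suc unfolding c_def by auto
      ultimately show ?thesis by simp
    qed
    show ?thesis using propc gr by blast
  qed
qed

lemma count_classes:
  assumes "finite V"
  shows "(\<Sum>j<M. card {v\<in>V. c v = j}) = card {v\<in>V. c v < (M::nat)}"
proof (induction M)
  case 0 then show ?case by simp
next
  case (Suc M)
  have "{v\<in>V. c v < Suc M} = {v\<in>V. c v < M} \<union> {v\<in>V. c v = M}" by auto
  moreover have "card ({v\<in>V. c v < M} \<union> {v\<in>V. c v = M}) = card {v\<in>V. c v < M} + card {v\<in>V. c v = M}"
    using assms by (intro card_Un_disjoint) auto
  ultimately show ?case using Suc by simp
qed

lemma suffix_le:
  fixes y :: "nat \<Rightarrow> nat"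
  assumes "\<And>i j. i \<le> j \<Longrightarrow> j < s \<Longrightarrow> y j \<le> y i" and "A \<subseteq> {..<s}"
  shows "(\<Sum>i\<in>{s - card A..<s}. y i) \<le> sum y A"
  using assms
proof (induction s arbitrary: A)
  case 0 then show ?case by simp
next
  case (Suc s)
  have mono: "\<And>i j. i \<le> j \<Longrightarrow> j < s \<Longrightarrow> y j \<le> y i" using Suc.prems(1) by auto
  show ?case
  proof (cases "s \<in> A")
    case True
    define A' where "A' = A - {s}"
    have A'sub: "A' \<subseteq> {..<s}" unfolding A'_def using Suc.prems(2) by (auto simp: less_Suc_eq)
    have finA: "finite A" using Suc.prems(2) finite_subset by blast
    have "card A > 0" using True finA card_gt_0_iff by blast
    hence cA: "card A = Suc (card A')" using True finA A'_def by simp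
    have IH: "(\<Sum>i\<in>{s - card A'..<s}. y i) \<le> sum y A'" using Suc.IH[OF mono A'sub] .
    have "card A' \<le> s" using A'sub card_mono[of "{..<s}" A'] by auto
    hence eq: "{Suc s - card A..<Suc s} = insert s {s - card A'..<s}" using cA by auto
    have "(\<Sum>i\<in>{Suc s - card A..<Suc s}. y i) = y s + (\<Sum>i\<in>{s - card A'..<s}. y i)" unfolding eq by simp
    moreover have "sum y A = y s + sum y A'" using True finA A'_def by (simp add: sum.remove)
    ultimately show ?thesis using IH by simp
  next
    case False
    have Asub: "A \<subseteq> {..<s}" using Suc.prems(2) False by (auto simp: less_Suc_eq)
    have IH: "(\<Sum>i\<in>{s - card A..<s}. y i) \<le> sum y A" using Suc.IH[OF mono Asub] .
    have cle: "card A \<le> s" using Asub card_mono[of "{..<s}" A] by auto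
    have "(\<Sum>i\<in>{Suc s - card A..<Suc s}. y i) = (\<Sum>i\<in>{Suc (s - card A)..<Suc s}. y i)"
      using cle by (simp add: Suc_diff_le)
    also have "\<dots> = (\<Sum>i\<in>{s - card A..<s}. y (Suc i))" by (rule sum.shift_bounds_Suc_ivl)
    also have "\<dots> \<le> (\<Sum>i\<in>{s - card A..<s}. y i)" by (intro sum_mono) (use Suc.prems(1) in auto)
    finally show ?thesis using IH by simp
  qed
qed

lemma sum_suffix: "(\<Sum>k<s. \<Sum>i\<in>{k..<s}. (y::nat\<Rightarrow>nat) i) = (\<Sum>i<s. (i+1) * y i)"
proof (induction s)
  case 0 show ?case by simp
next
  case (Suc s)
  have "(\<Sum>k<Suc s. \<Sum>i\<in>{k..<Suc s}. y i) = (\<Sum>k<Suc s. (\<Sum>i\<in>{k..<s}. y i) + y s)"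
    by (intro sum.cong) auto
  also have "\<dots> = (\<Sum>k<s. \<Sum>i\<in>{k..<s}. y i) + Suc s * y s"
    by (simp add: sum.distrib)
  finally show ?case using Suc by simp
qed

lemma swap_count:
  fixes Y :: "nat \<Rightarrow> nat"
  assumes "\<And>k. k < s \<Longrightarrow> Y k \<le> M"
  shows "(\<Sum>j<M. card {k\<in>{..<s}. j < Y k}) = (\<Sum>k<s. Y k)"
proof -
  have "(\<Sum>j<M. card {k\<in>{..<s}. j < Y k}) = (\<Sum>j<M. \<Sum>k<s. if j < Y k then 1 else 0)"
    by (intro sum.cong refl) (simp add: sum.inter_filter[symmetric])
  also have "\<dots> = (\<Sum>k<s. \<Sum>j<M. if j < Y k then 1 else 0)" by (rule sum.swap)
  also have "\<dots> = (\<Sum>k<s. card {j\<in>{..<M}. j < Y k})"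
    by (intro sum.cong refl) (simp add: sum.inter_filter[symmetric])
  also have "\<dots> = (\<Sum>k<s. Y k)"
  proof (intro sum.cong refl)
    fix k assume "k \<in> {..<s}"
    hence "Y k \<le> M" using assms by auto
    hence "{j\<in>{..<M}. j < Y k} = {..<Y k}" by auto
    thus "card {j\<in>{..<M}. j < Y k} = Y k" by simp
  qed
  finally show ?thesis .
qed


lemma lower:
  fixes s :: nat and y :: "nat \<Rightarrow> nat" and EG :: "nat \<Rightarrow> nat \<Rightarrow> bool"
  assumes mono: "\<And>i j. i \<le> j \<Longrightarrow> j < s \<Longrightarrow> y j \<le> y i"
    and sg: "simple_graph {0..<m} EG"
    and lt: "m < (\<Sum>i<s. (i + 1) * y i)"
  shows "\<exists>c. proper_coloring {0..<m} EG c \<and> \<not> has_rainbow_induced_copy (cliques_V s y) (cliques_E s y) {0..<m} EG c"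
proof -
  let ?V = "{0..<m}"
  have irr: "\<And>x. \<not> EG x x" using sg unfolding simple_graph_def by blast
  obtain c :: "nat \<Rightarrow> nat" where cp: "\<forall>x\<in>?V. \<forall>z\<in>?V. EG x z \<longrightarrow> c x \<noteq> c z"
    and cg: "\<forall>j I. I \<subseteq> {v\<in>?V. j \<le> c v} \<longrightarrow> indep EG I \<longrightarrow> card I \<le> card {v\<in>?V. c v = j}"
    using greedy_col[of ?V EG] irr by blast
  have "\<not> has_rainbow_induced_copy (cliques_V s y) (cliques_E s y) ?V EG c"
  proof
    assume "has_rainbow_induced_copy (cliques_V s y) (cliques_E s y) ?V EG c"
    then obtain f where finj: "inj_on f (cliques_V s y)" and fV: "f ` cliques_V s y \<subseteq> ?V"
      and find: "\<forall>u\<in>cliques_V s y. \<forall>v\<in>cliques_V s y. cliques_E s y u v \<longleftrightarrow> EG (f u) (f v)"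
      and rb: "inj_on (c \<circ> f) (cliques_V s y)"
      unfolding has_rainbow_induced_copy_def by blast
    define Y where "Y k = (\<Sum>i\<in>{k..<s}. y i)" for k
    define M where "M = Y 0"
    have Ymono: "Y k \<le> Y k'" if "k' \<le> k" for k k' unfolding Y_def using that by (intro sum_mono2) auto
    have key: "card {k\<in>{..<s}. j < Y k} \<le> card {v\<in>?V. c v = j}" for j
    proof -
      define A where "A = {i\<in>{..<s}. \<exists>x<y i. j \<le> c (f (i,x))}"
      define A' where "A' = {..<s} - A"
      have pick: "\<exists>x. x < y i \<and> j \<le> c (f (i,x))" if "i \<in> A" for i using that A_def by auto
      define p where "p i = (SOME x. x < y i \<and> j \<le> c (f (i,x)))" for i
      have pp: "p i < y i \<and> j \<le> c (f (i, p i))" if "i \<in> A" for i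
        using someI_ex[OF pick[OF that]] p_def by simp
      define I where "I = (\<lambda>i. f (i, p i)) ` A"
      have memV: "(i, p i) \<in> cliques_V s y" if "i \<in> A" for i
        using pp[OF that] that unfolding A_def cliques_V_def by auto
      have "I \<subseteq> {v\<in>?V. j \<le> c v}"
      proof
        fix v assume "v \<in> I"
        then obtain i where i: "i \<in> A" "v = f (i, p i)" unfolding I_def by auto
        have "v \<in> ?V" using fV memV[OF i(1)] i(2) by auto
        thus "v \<in> {v\<in>?V. j \<le> c v}" using pp[OF i(1)] i(2) by auto
      qed
      moreover have "indep EG I"
        unfolding indep_def I_def
      proof (intro ballI)
        fix a b assume "a \<in> (\<lambda>i. f (i, p i)) ` A" "b \<in> (\<lambda>i. f (i, p i)) ` A"
        then obtain i i' where ii: "i \<in> A" "i' \<in> A" "a = f (i, p i)" "b = f (i', p i')" by auto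
        have "\<not> cliques_E s y (i, p i) (i', p i')" unfolding cliques_E_def by auto
        then show "\<not> EG a b" using find memV ii by blast
      qed
      ultimately have c1: "card I \<le> card {v\<in>?V. c v = j}" using cg by blast
      have "inj_on (\<lambda>i. f (i, p i)) A"
      proof (rule inj_onI)
        fix i i' assume "i \<in> A" "i' \<in> A" "f (i, p i) = f (i', p i')"
        hence "(i, p i) = (i', p i')" using finj memV unfolding inj_on_def by blast
        thus "i = i'" by simp
      qed
      hence cI: "card I = card A" unfolding I_def by (simp add: card_image)
      define W where "W = Sigma A' (\<lambda>i. {..<y i})"
      have WV: "W \<subseteq> cliques_V s y" unfolding W_def A'_def cliques_V_def by auto
      have finA': "finite A'" unfolding A'_def by auto
      have cW: "card W = sum y A'" unfolding W_def using finA' by (simp add: card_SigmaI)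
      have "(c \<circ> f) ` W \<subseteq> {..<j}" unfolding W_def A'_def A_def by (auto simp: not_le)
      hence "card ((c\<circ>f) ` W) \<le> j" using card_mono by (metis card_lessThan finite_lessThan)
      moreover have "card ((c\<circ>f) ` W) = card W" using rb WV by (meson card_image inj_on_subset)
      ultimately have "sum y A' \<le> j" using cW by simp
      moreover have "(\<Sum>i\<in>{s - card A'..<s}. y i) \<le> sum y A'"
        using suffix_le[of s y A'] mono unfolding A'_def by auto
      ultimately have Yle: "Y (s - card A') \<le> j" unfolding Y_def by simp
      have "{k\<in>{..<s}. j < Y k} \<subseteq> {..<s - card A'}"
      proof
        fix k assume "k \<in> {k\<in>{..<s}. j < Y k}"
        hence jk: "j < Y k" by auto
        show "k \<in> {..<s - card A'}"
        proof (rule ccontr)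
          assume "k \<notin> {..<s - card A'}"
          hence "s - card A' \<le> k" by auto
          hence "Y k \<le> Y (s - card A')" using Ymono by auto
          thus False using Yle jk by simp
        qed
      qed
      hence "card {k\<in>{..<s}. j < Y k} \<le> s - card A'" by (metis card_lessThan card_mono finite_lessThan)
      moreover have "card A' = s - card A" unfolding A'_def
        by (subst card_Diff_subset) (auto simp: A_def)
      moreover have "card A \<le> s" using card_mono[of "{..<s}" A] unfolding A_def by auto
      ultimately show ?thesis using c1 cI by simp
    qed
    have "(\<Sum>j<M. card {k\<in>{..<s}. j < Y k}) \<le> (\<Sum>j<M. card {v\<in>?V. c v = j})"
      by (intro sum_mono key)
    also have "\<dots> = card {v\<in>?V. c v < M}" by (rule count_classes) simp
    also have "\<dots> \<le> card ?V" by (rule card_mono) auto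
    also have "\<dots> = m" by simp
    finally have le: "(\<Sum>j<M. card {k\<in>{..<s}. j < Y k}) \<le> m" .
    have "(\<Sum>j<M. card {k\<in>{..<s}. j < Y k}) = (\<Sum>k<s. Y k)"
      by (rule swap_count) (simp add: M_def Ymono)
    also have "\<dots> = (\<Sum>i<s. (i + 1) * y i)" unfolding Y_def by (rule sum_suffix)
    finally show False using le lt by simp
  qed
  moreover have "proper_coloring ?V EG c" unfolding proper_coloring_def using cp by blast
  ultimately show ?thesis by blast
qed


lemma upper:
  fixes s :: nat and y :: "nat \<Rightarrow> nat"
  shows "rho_witness_size (cliques_V s y) (cliques_E s y) (\<Sum>i<s. (i + 1) * y i)"
proof -
  define N where "N = (\<Sum>i<s. (i + 1) * y i)"
  define Y where "Y k = (\<Sum>i\<in>{k..<s}. y i)" for k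
  define W where "W = Sigma {..<s} (\<lambda>i. {..<Y i})"
  have cW: "card W = N" unfolding W_def N_def using sum_suffix[where s=s and y=y] by (simp add: card_SigmaI Y_def)
  have "finite W" unfolding W_def by auto
  then obtain h where hb: "bij_betw h {0..<N} W" using ex_bij_betw_nat_finite cW by metis
  define EG where "EG u v \<longleftrightarrow> u < N \<and> v < N \<and> u \<noteq> v \<and> fst (h u) = fst (h v)" for u v
  have sg: "simple_graph {0..<N} EG" unfolding simple_graph_def EG_def by auto
  have main: "\<forall>c. proper_coloring {0..<N} EG c \<longrightarrow> has_rainbow_induced_copy (cliques_V s y) (cliques_E s y) {0..<N} EG c"
  proof (intro allI impI)
    fix c assume pc: "proper_coloring {0..<N} EG c"
    define D where "D k = {(i,x). k \<le> i \<and> i < s \<and> x < y i}" for k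
    define B where "B k = {u\<in>{0..<N}. fst (h u) = k}" for k
    have cB: "card (B k) = Y k" if "k < s" for k
    proof -
      have "h ` B k = {k} \<times> {..<Y k}"
      proof
        show "h ` B k \<subseteq> {k} \<times> {..<Y k}"
        proof
          fix z assume "z \<in> h ` B k"
          then obtain u where u: "u \<in> B k" "z = h u" by auto
          have "u \<in> {0..<N}" using u B_def by auto
          hence "h u \<in> W" using bij_betwE[OF hb] by blast
          thus "z \<in> {k} \<times> {..<Y k}" using u B_def W_def by (cases z) auto
        qed
        show "{k} \<times> {..<Y k} \<subseteq> h ` B k"
        proof
          fix z assume z: "z \<in> {k} \<times> {..<Y k}"
          hence "z \<in> W" using that W_def by auto
          then obtain u where "u \<in> {0..<N}" "z = h u" using hb unfolding bij_betw_def by auto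
          thus "z \<in> h ` B k" using z B_def by auto
        qed
      qed
      moreover have "inj_on h (B k)" using hb unfolding B_def bij_betw_def
        by (rule inj_on_subset[OF conjunct1]) auto
      ultimately have "card (B k) = card ({k} \<times> {..<Y k})" by (metis card_image)
      thus ?thesis by (simp add: card_cartesian_product)
    qed
    have cinj: "inj_on c (B k)" for k
    proof (rule inj_onI)
      fix u v assume uv: "u \<in> B k" "v \<in> B k" "c u = c v"
      show "u = v"
      proof (rule ccontr)
        assume "u \<noteq> v"
        hence "EG u v" using uv unfolding B_def EG_def by auto
        moreover have "u \<in> {0..<N}" "v \<in> {0..<N}" using uv unfolding B_def by auto
        ultimately show False using pc uv(3) unfolding proper_coloring_def by blast
      qed
    qed
    have claim: "\<exists>f. (\<forall>i x. k \<le> i \<longrightarrow> i < s \<longrightarrow> x < y i \<longrightarrow> f (i,x) \<in> B i) \<and> inj_on f (D k) \<and> inj_on (c \<circ> f) (D k)" if "k \<le> s" for k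
      using that
    proof (induction k rule: inc_induct)
      case base
      have "D s = {}" unfolding D_def by auto
      thus ?case by auto
    next
      case (step n)
      have ns: "n < s" using step by simp
      from step obtain f where fB: "\<forall>i x. Suc n \<le> i \<longrightarrow> i < s \<longrightarrow> x < y i \<longrightarrow> f (i,x) \<in> B i"
        and fi: "inj_on f (D (Suc n))" and fc: "inj_on (c \<circ> f) (D (Suc n))" by blast
      define C where "C = (c \<circ> f) ` D (Suc n)"
      have DS: "D (Suc n) = Sigma {Suc n..<s} (\<lambda>i. {..<y i})" unfolding D_def by auto
      have "card C = card (D (Suc n))" unfolding C_def by (rule card_image[OF fc])
      hence cC: "card C = Y (Suc n)" unfolding DS Y_def by simp
      have finC: "finite C" unfolding C_def DS by auto
      define B' where "B' = {u\<in>B n. c u \<notin> C}"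
      have finB: "finite (B n)" unfolding B_def by auto
      have c2: "card {u\<in>B n. c u \<in> C} \<le> card C"
        by (rule card_inj_on_le[OF _ _ finC]) (auto intro: inj_on_subset[OF cinj[of n]])
      have "card (B n) = card (B' \<union> {u\<in>B n. c u \<in> C})" unfolding B'_def by (rule arg_cong[where f=card]) auto
      also have "\<dots> = card B' + card {u\<in>B n. c u \<in> C}"
        using finB unfolding B'_def by (intro card_Un_disjoint) auto
      finally have c3: "card (B n) = card B' + card {u\<in>B n. c u \<in> C}" .
      have "Y n = y n + Y (Suc n)" using ns unfolding Y_def by (simp add: sum.atLeast_Suc_lessThan)
      hence yle: "y n \<le> card B'" using c2 c3 cC cB[OF ns] by simp
      have "finite B'" using finB unfolding B'_def by auto
      then obtain g where gB: "g ` {..<y n} \<subseteq> B'" and gi: "inj_on g {..<y n}"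
        using card_le_inj[of "{..<y n}" B'] yle by auto
      define f' where "f' p = (if fst p = n then g (snd p) else f p)" for p
      have Dn: "D n = D (Suc n) \<union> {n} \<times> {..<y n}" unfolding D_def using ns
        by (auto simp: Suc_le_eq) (metis le_eq_less_or_eq)
      have place: "\<forall>i x. n \<le> i \<longrightarrow> i < s \<longrightarrow> x < y i \<longrightarrow> f' (i,x) \<in> B i"
      proof (intro allI impI)
        fix i x assume "n \<le> i" "i < s" "x < y i"
        thus "f' (i,x) \<in> B i"
        proof (cases "i = n")
          case True thus ?thesis using gB \<open>x < y i\<close> unfolding f'_def B'_def by auto
        next
          case False thus ?thesis using fB \<open>n \<le> i\<close> \<open>i < s\<close> \<open>x < y i\<close> unfolding f'_def by auto
        qed
      qed
      have inB: "f' p \<in> B (fst p)" if "p \<in> D n" for p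
        using place that unfolding D_def by auto
      have i1: "inj_on f' (D n)"
      proof (rule inj_onI)
        fix p q assume p: "p \<in> D n" and q: "q \<in> D n" and e: "f' p = f' q"
        have "fst p = fst q" using inB[OF p] inB[OF q] e unfolding B_def by auto
        show "p = q"
        proof (cases "fst p = n")
          case True
          hence "snd p < y n" "snd q < y n" using p q \<open>fst p = fst q\<close> unfolding D_def by auto
          hence "snd p = snd q" using gi e True \<open>fst p = fst q\<close> unfolding f'_def inj_on_def by auto
          thus ?thesis using \<open>fst p = fst q\<close> by (simp add: prod_eq_iff)
        next
          case False
          hence "p \<in> D (Suc n)" "q \<in> D (Suc n)" using p q \<open>fst p = fst q\<close> unfolding D_def by auto
          thus ?thesis using fi e False \<open>fst p = fst q\<close> unfolding f'_def inj_on_def by auto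
        qed
      qed
      have i2: "inj_on (c \<circ> f') (D n)"
      proof (rule inj_onI)
        fix p q assume p: "p \<in> D n" and q: "q \<in> D n" and e: "(c \<circ> f') p = (c \<circ> f') q"
        have new: "c (f' r) \<notin> C" if "r \<in> D n" "fst r = n" for r
        proof -
          have "snd r < y n" using that unfolding D_def by auto
          hence "g (snd r) \<in> B'" using gB by auto
          thus ?thesis using that unfolding f'_def B'_def by auto
        qed
        have old: "c (f' r) \<in> C" if "r \<in> D n" "fst r \<noteq> n" for r
        proof -
          have "r \<in> D (Suc n)" using that unfolding D_def by auto
          thus ?thesis using that unfolding f'_def C_def by auto
        qed
        show "p = q"
        proof (cases "fst p = n")
          case True
          have "fst q = n"
          proof (rule ccontr)
            assume "fst q \<noteq> n"
            thus False using old[OF q] new[OF p True] e by simp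
          qed
          have "f' p = f' q" using cinj[of n] inB[OF p] inB[OF q] True \<open>fst q = n\<close> e
            unfolding inj_on_def by auto
          thus ?thesis using i1 p q unfolding inj_on_def by blast
        next
          case False
          have "fst q \<noteq> n"
          proof
            assume "fst q = n"
            thus False using new[OF q] old[OF p False] e by simp
          qed
          hence "p \<in> D (Suc n)" "q \<in> D (Suc n)" using p q False unfolding D_def by auto
          thus ?thesis using fc e False \<open>fst q \<noteq> n\<close> unfolding f'_def inj_on_def by auto
        qed
      qed
      show ?case using place i1 i2 by blast
    qed
    obtain f where fB: "\<forall>i x. 0 \<le> i \<longrightarrow> i < s \<longrightarrow> x < y i \<longrightarrow> f (i,x) \<in> B i"
      and fi: "inj_on f (D 0)" and fc: "inj_on (c \<circ> f) (D 0)" using claim[of 0] by auto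
    have VD: "cliques_V s y = D 0" unfolding cliques_V_def D_def by auto
    have fBp: "f p \<in> B (fst p)" if "p \<in> cliques_V s y" for p
      using fB that unfolding cliques_V_def by auto
    show "has_rainbow_induced_copy (cliques_V s y) (cliques_E s y) {0..<N} EG c"
      unfolding has_rainbow_induced_copy_def
    proof (intro exI conjI)
      show "inj_on f (cliques_V s y)" using fi VD by simp
      show "inj_on (c \<circ> f) (cliques_V s y)" using fc VD by simp
      show "f ` cliques_V s y \<subseteq> {0..<N}" using fBp unfolding B_def by auto
      show "\<forall>u\<in>cliques_V s y. \<forall>v\<in>cliques_V s y. cliques_E s y u v = EG (f u) (f v)"
      proof (intro ballI)
        fix u v assume u: "u \<in> cliques_V s y" and v: "v \<in> cliques_V s y"
        have "(f u = f v) = (u = v)" using fi VD u v unfolding inj_on_def by auto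
        thus "cliques_E s y u v = EG (f u) (f v)"
          using fBp[OF u] fBp[OF v] u v unfolding cliques_E_def EG_def B_def by auto
      qed
    qed
  qed
  show ?thesis unfolding rho_witness_size_def N_def[symmetric] using sg main by blast
qed

theorem corollary3p2:
  fixes s :: nat and y :: "nat \<Rightarrow> nat"
  assumes "s \<ge> 1"
    and "\<And>i j. i \<le> j \<Longrightarrow> j < s \<Longrightarrow> y j \<le> y i"
    and "\<And>i. i < s \<Longrightarrow> y i \<ge> 1"
  shows "rho (cliques_V s y) (cliques_E s y) = (\<Sum>i<s. (i + 1) * y i)"
  unfolding rho_def
proof (rule Least_equality)
  show "rho_witness_size (cliques_V s y) (cliques_E s y) (\<Sum>i<s. (i + 1) * y i)" by (rule upper)
next
  fix m assume w: "rho_witness_size (cliques_V s y) (cliques_E s y) m"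
  show "(\<Sum>i<s. (i + 1) * y i) \<le> m"
  proof (rule ccontr)
    assume "\<not> (\<Sum>i<s. (i + 1) * y i) \<le> m"
    hence lt: "m < (\<Sum>i<s. (i + 1) * y i)" by simp
    from w obtain EG :: "nat \<Rightarrow> nat \<Rightarrow> bool" where sg: "simple_graph {0..<m} EG"
      and all: "\<forall>c. proper_coloring {0..<m} EG c \<longrightarrow> has_rainbow_induced_copy (cliques_V s y) (cliques_E s y) {0..<m} EG c"
      unfolding rho_witness_size_def by blast
    from lower[OF assms(2) sg lt] all show False by blast
  qed
qed

end
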